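(* Let $U:\mathbb{R}^d\to\mathbb{R}$ be twice continuously differentiable with $\nabla U(0)=0$ and $\sup_x\|\mathrm{D}^2U(x)\|\le\mathtt{L}$, and assume there exist $\mathtt{m}>0$, $\mathtt{K}\ge0$ with $\mathrm{D}^2U(x)[y,y]\ge\mathtt{m}$ whenever $\|x\|\ge\mathtt{K}$, $\|y\|=1$. Then for all $x,y\in\mathbb{R}^d$ with $\|x\|\vee\|y\|\ge\mathtt{K}+8\mathtt{K}\mathtt{L}/\mathtt{m}$, $$\langle\nabla U(x)-\nabla U(y),x-y\rangle\ge(\mathtt{m}/2)\|x-y\|^2.$$ *)

theory Defs
  imports "HOL-Analysis.Analysis"
begin

end

theory Submission
  imports Defs
begin

lemma mvt_lower:
  fixes f f' :: "real \<Rightarrow> real"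
  assumes "a \<le> b" and d: "\<And>t. (f has_real_derivative f' t) (at t)"
    and c: "\<And>t. a < t \<Longrightarrow> t < b \<Longrightarrow> c \<le> f' t"
  shows "c * (b - a) \<le> f b - f a"
proof (cases "a = b")
  case True then show ?thesis by simp
next
  case False
  then have "a < b" using assms by simp
  from MVT2[OF this, of f f'] d obtain z where "a < z" "z < b" "f b - f a = (b - a) * f' z"
    by blast
  then show ?thesis using c[of z] \<open>a < b\<close> by (simp add: mult.commute mult_right_mono)
qed

lemma piece:
  fixes f f' :: "real \<Rightarrow> real"
  assumes "a \<le> b" and d: "\<And>t. (f has_real_derivative f' t) (at t)"
    and lo: "\<And>t. 0 \<le> t \<Longrightarrow> t \<le> 1 \<Longrightarrow> - A \<le> f' t"
    and hi: "\<And>t. 0 \<le> t \<Longrightarrow> t \<le> 1 \<Longrightarrow> (t \<le> a \<or> t \<ge> b) \<Longrightarrow> B \<le> f' t"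
    and AB: "A + B \<ge> 0"
  shows "B - (A + B) * (b - a) \<le> f 1 - f 0"
proof -
  define a' where "a' = max 0 (min 1 a)"
  define b' where "b' = max 0 (min 1 b)"
  have o: "0 \<le> a'" "a' \<le> b'" "b' \<le> 1" "b' - a' \<le> b - a"
    using assms(1) unfolding a'_def b'_def by auto
  have 1: "B * (a' - 0) \<le> f a' - f 0"
    by (rule mvt_lower[OF o(1) d]) (rule hi, auto simp: a'_def)
  have 2: "(-A) * (b' - a') \<le> f b' - f a'"
    by (rule mvt_lower[OF o(2) d]) (rule lo, use o in auto)
  have 3: "B * (1 - b') \<le> f 1 - f b'"
    by (rule mvt_lower[OF o(3) d]) (rule hi, auto simp: b'_def)
  have "(A + B) * (b' - a') \<le> (A + B) * (b - a)"
    by (rule mult_left_mono[OF o(4) AB])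
  then show ?thesis using 1 2 3 by (simp add: algebra_simps)
qed

theorem lemma9:
  fixes U :: "'a::euclidean_space \<Rightarrow> real"
    and gradU :: "'a \<Rightarrow> 'a"
    and H :: "'a \<Rightarrow> 'a \<Rightarrow>\<^sub>L 'a"
    and L m K :: real
  assumes grad: "\<And>x. (U has_derivative (\<lambda>h. gradU x \<bullet> h)) (at x)"
    and hess: "\<And>x. (gradU has_derivative blinfun_apply (H x)) (at x)"
    and hess_cont: "continuous_on UNIV H"
    and grad0: "gradU 0 = 0"
    and hess_bound: "\<And>x. norm (H x) \<le> L"
    and m_pos: "m > 0"
    and K_nonneg: "K \<ge> 0"
    and convex_out: "\<And>x y. norm x \<ge> K \<Longrightarrow> norm y = 1 \<Longrightarrow> (H x y) \<bullet> y \<ge> m"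
  shows "\<forall>x y. max (norm x) (norm y) \<ge> K + 8 * K * L / m \<longrightarrow>
           (gradU x - gradU y) \<bullet> (x - y) \<ge> (m / 2) * (norm (x - y))\<^sup>2"
proof -
  define R where "R = K + 8 * K * L / m"
  have L0: "0 \<le> L" using hess_bound[of 0] norm_ge_zero order_trans by blast
  have KR: "K \<le> R" unfolding R_def using L0 K_nonneg m_pos by simp
  have hb: "\<bar>H p w \<bullet> w\<bar> \<le> L * (norm w)^2" for p w
  proof -
    have "\<bar>H p w \<bullet> w\<bar> \<le> norm (H p w) * norm w" by (rule Cauchy_Schwarz_ineq2)
    also have "\<dots> \<le> (norm (H p) * norm w) * norm w"
      by (rule mult_right_mono[OF norm_blinfun norm_ge_zero])
    also have "\<dots> \<le> (L * norm w) * norm w"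
      by (intro mult_right_mono hess_bound norm_ge_zero)
    finally show ?thesis by (simp add: power2_eq_square mult.assoc)
  qed
  have hc: "m * (norm w)^2 \<le> H p w \<bullet> w" if "norm p \<ge> K" for p w
  proof (cases "w = 0")
    case True then show ?thesis by simp
  next
    case False
    define u where "u = w /\<^sub>R norm w"
    have nu: "norm u = 1" using False by (simp add: u_def)
    have w: "w = norm w *\<^sub>R u" using False by (simp add: u_def)
    have "H p w \<bullet> w = (norm w)^2 * (H p u \<bullet> u)"
      by (subst (1 2) w) (simp add: blinfun.scaleR_right power2_eq_square)
    moreover have "m \<le> H p u \<bullet> u" using convex_out[OF that nu] .
    ultimately show ?thesis using mult_right_mono[of m "H p u \<bullet> u" "(norm w)^2"] by (simp add: mult.commute)
  qed
  have mL: "m \<le> L"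
  proof -
    obtain u :: 'a where "norm u = 1" using vector_choose_size[of 1] by auto
    then have "m \<le> H (K *\<^sub>R u) u \<bullet> u" using K_nonneg by (intro convex_out) auto
    also have "\<dots> \<le> L" using hb[of "K *\<^sub>R u" u] \<open>norm u = 1\<close> by simp
    finally show ?thesis .
  qed
  have main: "m / 2 * (norm (x - y))^2 \<le> (gradU x - gradU y) \<bullet> (x - y)"
    if xR: "norm x \<ge> R" for x y
  proof (cases "x = y")
    case True then show ?thesis by simp
  next
    case False
    define v where "v = x - y"
    define nv where "nv = norm v"
    have nv0: "nv > 0" using False by (simp add: nv_def v_def)
    define f where "f t = gradU (y + t *\<^sub>R v) \<bullet> v" for t
    define f' where "f' t = H (y + t *\<^sub>R v) v \<bullet> v" for t
    have d: "(f has_real_derivative f' t) (at t)" for t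
    proof -
      have l: "((\<lambda>t. y + t *\<^sub>R v) has_derivative (\<lambda>h. h *\<^sub>R v)) (at t)"
        by (auto intro!: derivative_eq_intros)
      have g: "((\<lambda>t. gradU (y + t *\<^sub>R v)) has_derivative (\<lambda>h. H (y + t *\<^sub>R v) (h *\<^sub>R v))) (at t)"
        using has_derivative_compose[OF l hess] by simp
      have "(f has_derivative (\<lambda>h. H (y + t *\<^sub>R v) (h *\<^sub>R v) \<bullet> v)) (at t)"
        unfolding f_def using bounded_linear.has_derivative[OF bounded_linear_inner_left g] .
      moreover have "(\<lambda>h. H (y + t *\<^sub>R v) (h *\<^sub>R v) \<bullet> v) = (*) (f' t)"
        by (auto simp: f'_def blinfun.scaleR_right)
      ultimately show ?thesis by (simp add: has_field_derivative_def)
    qed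
    have f10: "f 1 - f 0 = (gradU x - gradU y) \<bullet> (x - y)"
      by (simp add: f_def v_def inner_diff_left)
    have lo: "- (L * nv^2) \<le> f' t" for t
      using hb[of "y + t *\<^sub>R v" v] by (simp add: f'_def nv_def)
    have hi: "m * nv^2 \<le> f' t" if "norm (y + t *\<^sub>R v) \<ge> K" for t
      using hc[OF that, of v] by (simp add: f'_def nv_def)
    have AB: "L * nv^2 + m * nv^2 \<ge> 0" using L0 m_pos by simp
    show ?thesis
    proof (cases "nv \<le> norm x - K")
      case True
      have "m * nv^2 - (L * nv^2 + m * nv^2) * (2 - 2) \<le> f 1 - f 0"
      proof (rule piece[OF _ d])
        fix t :: real assume t: "0 \<le> t" "t \<le> 1"
        have p: "y + t *\<^sub>R v = x - (1 - t) *\<^sub>R v" by (simp add: v_def algebra_simps)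
        have "norm ((1 - t) *\<^sub>R v) \<le> nv" using t by (simp add: nv_def mult_left_le_one_le)
        then have "norm x - nv \<le> norm (y + t *\<^sub>R v)" unfolding p
          using norm_triangle_ineq2[of x "(1 - t) *\<^sub>R v"] by linarith
        then show "m * nv^2 \<le> f' t" using True by (intro hi) simp
      qed (use lo AB in auto)
      then have "m * nv^2 \<le> (gradU x - gradU y) \<bullet> (x - y)" using f10 by simp
      moreover have "m / 2 * nv^2 \<le> m * nv^2" using m_pos by simp
      ultimately show ?thesis by (simp add: nv_def v_def)
    next
      case False
      define a where "a = (- K * nv - y \<bullet> v) / nv^2"
      define b where "b = (K * nv - y \<bullet> v) / nv^2"
      have ab: "b - a = 2 * K / nv" using nv0 unfolding a_def b_def
        by (simp add: field_simps power2_eq_square)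
      have "m * nv^2 - (L * nv^2 + m * nv^2) * (b - a) \<le> f 1 - f 0"
      proof (rule piece[OF _ d])
        have "0 \<le> 2 * K / nv" using K_nonneg nv0 by simp
        then show "a \<le> b" using ab by linarith
        fix t :: real assume t: "0 \<le> t" "t \<le> 1" "t \<le> a \<or> b \<le> t"
        have pv: "(y + t *\<^sub>R v) \<bullet> v = y \<bullet> v + t * nv^2"
          by (simp add: inner_add_left nv_def power2_norm_eq_inner)
        have "K * nv \<le> \<bar>(y + t *\<^sub>R v) \<bullet> v\<bar>"
        proof (cases "t \<le> a")
          case True
          then have "t * nv^2 \<le> - K * nv - y \<bullet> v" using nv0 unfolding a_def
            by (simp add: le_divide_eq)
          then show ?thesis unfolding pv by linarith
        next
          case False
          then have "b \<le> t" using t by auto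
          then have "K * nv - y \<bullet> v \<le> t * nv^2" using nv0 unfolding b_def
            by (simp add: divide_le_eq)
          then show ?thesis unfolding pv by linarith
        qed
        also have "\<dots> \<le> norm (y + t *\<^sub>R v) * nv" unfolding nv_def by (rule Cauchy_Schwarz_ineq2)
        finally have "K \<le> norm (y + t *\<^sub>R v)" using nv0 by simp
        then show "m * nv^2 \<le> f' t" by (rule hi)
      qed (use lo AB in auto)
      moreover have "(L * nv^2 + m * nv^2) * (2 * K / nv) = (L + m) * 2 * K * nv"
        using nv0 by (simp add: power2_eq_square field_simps)
      ultimately have key: "m * nv^2 - (L + m) * 2 * K * nv \<le> (gradU x - gradU y) \<bullet> (x - y)"
        using f10 ab by simp
      have "8 * K * L / m \<le> norm x - K" using xR unfolding R_def by simp
      then have "8 * K * L \<le> m * (norm x - K)" using m_pos by (simp add: divide_le_eq mult.commute)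
      also have "\<dots> \<le> m * nv" using False m_pos by simp
      finally have e1: "8 * K * L \<le> m * nv" .
      have "K * (L + m) \<le> K * (2 * L)" using mL K_nonneg by (intro mult_left_mono) auto
      then have "4 * K * (L + m) \<le> 8 * K * L" by simp
      with e1 have "4 * K * (L + m) \<le> m * nv" by linarith
      then have "4 * K * (L + m) * nv \<le> m * nv * nv" using nv0 by (simp add: mult_right_mono)
      then have "m / 2 * nv^2 \<le> m * nv^2 - (L + m) * 2 * K * nv"
        by (simp add: power2_eq_square algebra_simps)
      with key show ?thesis by (simp add: nv_def v_def)
    qed
  qed
  show ?thesis
  proof (intro allI impI)
    fix x y :: 'a
    assume "max (norm x) (norm y) \<ge> K + 8 * K * L / m"
    then have "norm x \<ge> R \<or> norm y \<ge> R" unfolding R_def by linarith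
    then show "(gradU x - gradU y) \<bullet> (x - y) \<ge> (m / 2) * (norm (x - y))\<^sup>2"
    proof
      assume "norm x \<ge> R" then show ?thesis by (rule main)
    next
      assume "norm y \<ge> R"
      from main[OF this, of x] show ?thesis
        by (simp add: norm_minus_commute inner_diff_left inner_diff_right inner_commute)
    qed
  qed
qed

end
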